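(* Let $D\subset\mathbb R^m$ be open, $\epsilon_0>0$, and let $F_\epsilon:D\to\mathbb R^m$, $|\epsilon|<\epsilon_0$, be a smooth ($\mathcal C^\infty$ in $(x,\epsilon)$) near-identity family of maps, written $F_\epsilon(x)=x+\epsilon G_\epsilon(x)$. Let $D_0\subset D$ be compact. Then there is $r_0>0$ such that for every $x\in D_0$, every $n\in\mathbb N$ and every $\epsilon$ with $n|\epsilon|\le r_0$, the iterates $F_\epsilon^k(x)$, $|k|\le n$, are defined and lie in $D$, so that the interpolating vector field $X_n(x,\epsilon)$ is defined. Moreover, for every $n$, $X_n$ extends to $\epsilon=0$ as a function as smooth as the family $F_\epsilon$, and $X_n(x,0)=G_0(x)$.
   Context: For small $\epsilon$, $F_\epsilon$ is close to the identity and has a (local) inverse $F_\epsilon^{-1}$ near compact subsets of $D$; $F_\epsilon^{-k}$ denotes the $k$-th iterate of this inverse. For $\epsilon\neq0$ and a point $x$ whose iterates $x_k=F_\epsilon^k(x)$, $|k|\le n$, are defined, the interpolating vector field is $$X_n(x,\epsilon)=\epsilon^{-1}\sum_{k=1}^n p_{nk}\bigl(x_k-x_{-k}\bigr),\qquad p_{nk}=\frac{(-1)^{k+1}(n!)^2}{k(n+k)!(n-k)!};$$ equivalently, $X_n(x,\epsilon)=\partial_t p_n(0,x,\epsilon)$ where $p_n(\cdot,x,\epsilon)$ is the unique polynomial in $t$ of degree $2n$ with $p_n(k\epsilon,x,\epsilon)=x_k$ for all integers $|k|\le n$. *)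

theory Defs
  imports "HOL-Analysis.Analysis"
begin

text \<open>C^k on a set S (intended for open S): C^0 = continuous; C^(k+1) = differentiable
  on S and every directional derivative x \<mapsto> Df(x) v is C^k.\<close>
fun Ck :: "nat \<Rightarrow> ('a::euclidean_space \<Rightarrow> 'b::real_normed_vector) \<Rightarrow> 'a set \<Rightarrow> bool" where
  "Ck 0 f S \<longleftrightarrow> continuous_on S f"
| "Ck (Suc k) f S \<longleftrightarrow> f differentiable_on S \<and>
      (\<forall>v. Ck k (\<lambda>x. frechet_derivative f (at x) v) S)"

definition smooth_on :: "'a::euclidean_space set \<Rightarrow> ('a \<Rightarrow> 'b::real_normed_vector) \<Rightarrow> bool" where
  "smooth_on S f \<longleftrightarrow> (\<forall>k. Ck k f S)"

definition pcoef :: "nat \<Rightarrow> nat \<Rightarrow> real" where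
  "pcoef n k = (-1) ^ (k + 1) * (fact n)^2 / (real k * fact (n + k) * fact (n - k))"

definition interp_field :: "(real \<Rightarrow> 'a \<Rightarrow> 'a::real_vector) \<Rightarrow> (real \<Rightarrow> 'a \<Rightarrow> 'a) \<Rightarrow> nat \<Rightarrow> 'a \<Rightarrow> real \<Rightarrow> 'a" where
  "interp_field F Finv n x e =
     (1 / e) *\<^sub>R (\<Sum>k=1..n. pcoef n k *\<^sub>R ((F e ^^ k) x - (Finv e ^^ k) x))"

end

theory Submission
  imports Defs "HOL-Analysis.Analysis"
begin

lemma Ck_subset: "Ck k f S \<Longrightarrow> T \<subseteq> S \<Longrightarrow> Ck k f T"
  by (induction k arbitrary: f) (auto intro: continuous_on_subset differentiable_on_subset)

lemma Ck_Suc_down: "Ck (Suc k) f S \<Longrightarrow> Ck k f S"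
proof (induction k arbitrary: f)
  case 0 then show ?case by (simp add: differentiable_imp_continuous_on)
next
  case (Suc k) then show ?case by simp
qed

lemma Ck_le: "Ck k f S \<Longrightarrow> j \<le> k \<Longrightarrow> Ck j f S"
proof (induction k)
  case 0 then show ?case by simp
next
  case (Suc k) then show ?case by (metis Ck_Suc_down le_Suc_eq)
qed

lemma frechet_eq_open:
  assumes "open S" "x \<in> S" "\<And>x. x \<in> S \<Longrightarrow> f x = g x" "f differentiable at x"
  shows "frechet_derivative g (at x) = frechet_derivative f (at x)"
  "g differentiable at x"
proof -
  have "(f has_derivative frechet_derivative f (at x)) (at x)"
    using assms frechet_derivative_works by blast
  then have "(g has_derivative frechet_derivative f (at x)) (at x)"
    using has_derivative_transform_within_open assms by blast
  then show "frechet_derivative g (at x) = frechet_derivative f (at x)"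
     "g differentiable at x"
    using frechet_derivative_at differentiable_def by metis+
qed

lemma Ck_cong: "open S \<Longrightarrow> (\<And>x. x \<in> S \<Longrightarrow> f x = g x) \<Longrightarrow> Ck k f S \<Longrightarrow> Ck k g S"
proof (induction k arbitrary: f g)
  case 0 then show ?case using continuous_on_cong by (metis Ck.simps(1))
next
  case (Suc k)
  have d: "f differentiable at x" if "x \<in> S" for x
    using Suc.prems that by (simp add: differentiable_on_eq_differentiable_at)
  have "g differentiable_on S"
    using frechet_eq_open(2)[OF Suc.prems(1) _ Suc.prems(2) d] Suc.prems(1)
    by (simp add: differentiable_on_eq_differentiable_at)
  moreover have "Ck k (\<lambda>x. frechet_derivative g (at x) v) S" for v
    using Suc.IH[OF Suc.prems(1) _, of "\<lambda>x. frechet_derivative f (at x) v"]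
      frechet_eq_open(1)[OF Suc.prems(1) _ Suc.prems(2) d] Suc.prems(3) by simp
  ultimately show ?case by simp
qed

lemma Ck_SucI:
  assumes "open S" "\<And>x. x \<in> S \<Longrightarrow> (f has_derivative f' x) (at x)"
    "\<And>v. Ck k (\<lambda>x. f' x v) S"
  shows "Ck (Suc k) f S"
proof -
  have "f differentiable_on S"
    using assms(1,2) differentiable_on_eq_differentiable_at differentiable_def by blast
  moreover have "Ck k (\<lambda>x. frechet_derivative f (at x) v) S" for v
    by (rule Ck_cong[OF assms(1) _ assms(3)[of v]]) (metis assms(2) frechet_derivative_at)
  ultimately show ?thesis by simp
qed

lemma Ck_der:
  assumes "open S" "Ck (Suc k) f S" "x \<in> S"
  shows "(f has_derivative frechet_derivative f (at x)) (at x)"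
  using assms by (simp add: differentiable_on_eq_differentiable_at frechet_derivative_works[symmetric])

lemma Ck_const: "open S \<Longrightarrow> Ck k (\<lambda>x. c) S"
proof (induction k arbitrary: c)
  case 0 then show ?case by simp
next
  case (Suc k)
  show ?case by (rule Ck_SucI[where f'="\<lambda>x v. 0"]) (use Suc in auto)
qed

lemma Ck_add: "open S \<Longrightarrow> Ck k f S \<Longrightarrow> Ck k g S \<Longrightarrow> Ck k (\<lambda>x. f x + g x) S"
proof (induction k arbitrary: f g)
  case 0 then show ?case by (simp add: continuous_on_add)
next
  case (Suc k)
  show ?case
  proof (rule Ck_SucI[where f'="\<lambda>x v. frechet_derivative f (at x) v + frechet_derivative g (at x) v"])
    fix x assume x: "x \<in> S"
    show "((\<lambda>x. f x + g x) has_derivative (\<lambda>v. frechet_derivative f (at x) v + frechet_derivative g (at x) v)) (at x)"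
      by (rule has_derivative_add[OF Ck_der[OF Suc.prems(1,2) x] Ck_der[OF Suc.prems(1,3) x]])
  next
    fix v
    show "Ck k (\<lambda>x. frechet_derivative f (at x) v + frechet_derivative g (at x) v) S"
      using Suc.IH[OF Suc.prems(1)] Suc.prems(2,3) by simp
  qed (rule Suc.prems(1))
qed

lemma Ck_linear: "open S \<Longrightarrow> bounded_linear L \<Longrightarrow> Ck k f S \<Longrightarrow> Ck k (\<lambda>x. L (f x)) S"
proof (induction k arbitrary: f)
  case 0 then show ?case by (simp add: bounded_linear.continuous_on)
next
  case (Suc k)
  show ?case
  proof (rule Ck_SucI[where f'="\<lambda>x v. L (frechet_derivative f (at x) v)"])
    fix x assume x: "x \<in> S"
    show "((\<lambda>x. L (f x)) has_derivative (\<lambda>v. L (frechet_derivative f (at x) v))) (at x)"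
      by (rule bounded_linear.has_derivative[OF Suc.prems(2) Ck_der[OF Suc.prems(1,3) x]])
  next
    fix v
    show "Ck k (\<lambda>x. L (frechet_derivative f (at x) v)) S"
      using Suc.IH[OF Suc.prems(1,2)] Suc.prems(3) by simp
  qed (rule Suc.prems(1))
qed

lemma Ck_scaleR: "open S \<Longrightarrow> Ck k a S \<Longrightarrow> Ck k b S \<Longrightarrow> Ck k (\<lambda>x. a x *\<^sub>R b x) S"
proof (induction k arbitrary: a b)
  case 0 then show ?case by (simp add: continuous_on_scaleR)
next
  case (Suc k)
  have ak: "Ck k a S" and bk: "Ck k b S" using Suc.prems Ck_Suc_down by blast+
  have da: "Ck k (\<lambda>x. frechet_derivative a (at x) v) S" for v using Suc.prems(2) by simp
  have db: "Ck k (\<lambda>x. frechet_derivative b (at x) v) S" for v using Suc.prems(3) by simp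
  show ?case
  proof (rule Ck_SucI[where f'="\<lambda>x v. a x *\<^sub>R frechet_derivative b (at x) v + frechet_derivative a (at x) v *\<^sub>R b x"])
    show "open S" by fact
    fix x assume x: "x \<in> S"
    show "((\<lambda>x. a x *\<^sub>R b x) has_derivative (\<lambda>v. a x *\<^sub>R frechet_derivative b (at x) v + frechet_derivative a (at x) v *\<^sub>R b x)) (at x)"
      by (rule has_derivative_scaleR[OF Ck_der[OF Suc.prems(1,2) x] Ck_der[OF Suc.prems(1,3) x]])
  next
    fix v
    show "Ck k (\<lambda>x. a x *\<^sub>R frechet_derivative b (at x) v + frechet_derivative a (at x) v *\<^sub>R b x) S"
      by (rule Ck_add[OF Suc.prems(1) Suc.IH[OF Suc.prems(1) ak db] Suc.IH[OF Suc.prems(1) da bk]])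
  qed
qed

lemma Ck_sum: "open S \<Longrightarrow> (\<And>i. i \<in> I \<Longrightarrow> Ck k (f i) S) \<Longrightarrow> Ck k (\<lambda>x. \<Sum>i\<in>I. f i x) S"
proof (induction I rule: infinite_finite_induct)
  case (infinite I) then show ?case by (simp add: Ck_const)
next
  case empty then show ?case by (simp add: Ck_const)
next
  case (insert i I) then show ?case by (simp add: Ck_add)
qed

lemma Ck_pair: "open S \<Longrightarrow> Ck k f S \<Longrightarrow> Ck k g S \<Longrightarrow> Ck k (\<lambda>x. (f x, g x)) S"
proof (induction k arbitrary: f g)
  case 0 then show ?case by (simp add: continuous_on_Pair)
next
  case (Suc k)
  show ?case
  proof (rule Ck_SucI[where f'="\<lambda>x v. (frechet_derivative f (at x) v, frechet_derivative g (at x) v)"])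
    fix x assume x: "x \<in> S"
    show "((\<lambda>x. (f x, g x)) has_derivative (\<lambda>v. (frechet_derivative f (at x) v, frechet_derivative g (at x) v))) (at x)"
      by (rule has_derivative_Pair[OF Ck_der[OF Suc.prems(1,2) x] Ck_der[OF Suc.prems(1,3) x]])
  next
    fix v
    show "Ck k (\<lambda>x. (frechet_derivative f (at x) v, frechet_derivative g (at x) v)) S"
      using Suc.IH[OF Suc.prems(1)] Suc.prems(2,3) by simp
  qed (rule Suc.prems(1))
qed

lemma Ck_id: "open S \<Longrightarrow> Ck k (\<lambda>x. x) S"
proof (cases k)
  case 0 then show ?thesis by simp
next
  case (Suc j)
  assume "open S"
  show ?thesis unfolding Suc
    by (rule Ck_SucI[where f'="\<lambda>x v. v"]) (use \<open>open S\<close> in \<open>auto intro: Ck_const\<close>)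
qed

lemma linear_basis_expand:
  fixes L :: "'a::euclidean_space \<Rightarrow> 'b::real_vector"
  assumes "linear L"
  shows "L u = (\<Sum>i\<in>Basis. (u \<bullet> i) *\<^sub>R L i)"
proof -
  have "L u = L (\<Sum>i\<in>Basis. (u \<bullet> i) *\<^sub>R i)" by (simp add: euclidean_representation)
  also have "\<dots> = (\<Sum>i\<in>Basis. (u \<bullet> i) *\<^sub>R L i)"
    using assms by (simp add: linear_sum linear_scale)
  finally show ?thesis .
qed

lemma smooth_Ck: "smooth_on S f \<Longrightarrow> Ck k f S"
  by (simp add: smooth_on_def)

lemma smooth_D: "smooth_on S f \<Longrightarrow> smooth_on S (\<lambda>x. frechet_derivative f (at x) v)"
  unfolding smooth_on_def by (metis Ck.simps(2))

lemma Ck_comp: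
  fixes g :: "'a::euclidean_space \<Rightarrow> 'b::euclidean_space" and f :: "'b \<Rightarrow> 'c::real_normed_vector"
  shows "open S \<Longrightarrow> open T \<Longrightarrow> Ck k g S \<Longrightarrow> smooth_on T f \<Longrightarrow> g ` S \<subseteq> T \<Longrightarrow> Ck k (\<lambda>x. f (g x)) S"
proof (induction k arbitrary: g f)
  case 0
  have "continuous_on T f" using smooth_Ck[OF 0(4), of 0] by simp
  then show ?case using 0 continuous_on_compose2 by (metis Ck.simps(1))
next
  case (Suc k)
  have gd: "(g has_derivative frechet_derivative g (at x)) (at x)" if "x \<in> S" for x
    using Ck_der[OF Suc.prems(1,3) that] .
  have fd: "(f has_derivative frechet_derivative f (at y)) (at y)" if "y \<in> T" for y
    using Ck_der[OF Suc.prems(2) smooth_Ck[OF Suc.prems(4)] that] .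
  have lin: "linear (frechet_derivative f (at y))" if "y \<in> T" for y
    using fd[OF that] has_derivative_linear by blast
  show ?case
  proof (rule Ck_SucI[where f'="\<lambda>x v. frechet_derivative f (at (g x)) (frechet_derivative g (at x) v)"])
    show "open S" by fact
    fix x assume "x \<in> S"
    then show "((\<lambda>x. f (g x)) has_derivative (\<lambda>v. frechet_derivative f (at (g x)) (frechet_derivative g (at x) v))) (at x)"
      using diff_chain_at[OF gd fd] Suc.prems(5) by (auto simp: o_def)
  next
    fix v
    have "Ck k (\<lambda>x. \<Sum>i\<in>Basis. (frechet_derivative g (at x) v \<bullet> i) *\<^sub>R frechet_derivative f (at (g x)) i) S"
    proof (intro Ck_sum Ck_scaleR)
      fix i :: 'b
      show "Ck k (\<lambda>x. frechet_derivative g (at x) v \<bullet> i) S"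
        using Ck_linear[OF Suc.prems(1) bounded_linear_inner_left, of k "\<lambda>x. frechet_derivative g (at x) v" i]
          Suc.prems(3) by simp
      show "Ck k (\<lambda>x. frechet_derivative f (at (g x)) i) S"
        using Suc.IH[OF Suc.prems(1,2) Ck_Suc_down[OF Suc.prems(3)] smooth_D[OF Suc.prems(4)] Suc.prems(5)] .
    qed (use Suc.prems in auto)
    then show "Ck k (\<lambda>x. frechet_derivative f (at (g x)) (frechet_derivative g (at x) v)) S"
    proof (rule Ck_cong[OF Suc.prems(1), rotated])
      fix x assume "x \<in> S"
      then have "g x \<in> T" using Suc.prems(5) by blast
      then show "(\<Sum>i\<in>Basis. (frechet_derivative g (at x) v \<bullet> i) *\<^sub>R frechet_derivative f (at (g x)) i) = frechet_derivative f (at (g x)) (frechet_derivative g (at x) v)"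
        using linear_basis_expand[OF lin] by metis
    qed
  qed
qed


lemma lin_inv_facts:
  fixes L :: "'b::euclidean_space \<Rightarrow> 'b"
  assumes "linear L" "inj L"
  shows "L (inv L v) = v" "inv L (L u) = u" "linear (inv L)" "bounded_linear (inv L)"
proof -
  have s: "surj L" using linear_injective_imp_surjective assms by blast
  show "L (inv L v) = v" using s by (simp add: surj_f_inv_f)
  show "inv L (L u) = u" using assms by simp
  show li: "linear (inv L)" using inj_linear_imp_inv_linear assms by blast
  then show "bounded_linear (inv L)" by (simp add: linear_conv_bounded_linear)
qed

lemma lin_diff_bound:
  fixes A B :: "'b::euclidean_space \<Rightarrow> 'c::real_normed_vector"
  assumes "linear A" "linear B"
  shows "norm (A x - B x) \<le> (\<Sum>i\<in>Basis. norm (A i - B i)) * norm x"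
proof -
  have "A x - B x = (\<Sum>i\<in>Basis. (x \<bullet> i) *\<^sub>R (A i - B i))"
    using linear_basis_expand[OF assms(1), of x] linear_basis_expand[OF assms(2), of x]
    by (simp add: sum_subtractf scaleR_diff_right)
  also have "norm \<dots> \<le> (\<Sum>i\<in>Basis. norm ((x \<bullet> i) *\<^sub>R (A i - B i)))" by (rule norm_sum)
  also have "\<dots> \<le> (\<Sum>i\<in>Basis. norm x * norm (A i - B i))"
    by (intro sum_mono) (simp add: Basis_le_norm mult_right_mono)
  finally show ?thesis by (simp add: sum_distrib_left mult.commute)
qed

lemma lin_solve_cont:
  fixes A :: "'y::topological_space \<Rightarrow> 'b::euclidean_space \<Rightarrow> 'b"
  assumes lin: "\<And>y. y \<in> U \<Longrightarrow> linear (A y)" and inj: "\<And>y. y \<in> U \<Longrightarrow> inj (A y)"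
    and cA: "\<And>u. continuous_on U (\<lambda>y. A y u)" and cb: "continuous_on U b"
  shows "continuous_on U (\<lambda>y. inv (A y) (b y))"
  unfolding continuous_on_def
proof
  fix y0 assume y0: "y0 \<in> U"
  define w where "w y = inv (A y) (b y)" for y
  obtain C where C: "C > 0" "\<And>x. C * norm x \<le> norm (A y0 x)"
    using linear_inj_bounded_below_pos[OF lin[OF y0] inj[OF y0]] by blast
  define e where "e y = (\<Sum>i\<in>Basis. norm (A y i - A y0 i))" for y
  have "((\<lambda>y. e y) \<longlongrightarrow> (\<Sum>i\<in>(Basis::'b set). norm (A y0 i - A y0 i))) (at y0 within U)"
    unfolding e_def
    by (intro tendsto_intros) (use cA y0 in \<open>auto simp: continuous_on_def\<close>)
  then have e0: "((\<lambda>y. e y) \<longlongrightarrow> 0) (at y0 within U)" by simp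
  have evU: "eventually (\<lambda>y. y \<in> U) (at y0 within U)" by (auto simp: eventually_at_filter)
  have ev: "eventually (\<lambda>y. e y < C / 2) (at y0 within U)"
    using order_tendstoD(2)[OF e0, of "C/2"] C by simp
  define g where "g y = (2 / C) * norm (b y - A y (w y0))" for y
  have "((\<lambda>y. g y) \<longlongrightarrow> (2 / C) * norm (b y0 - A y0 (w y0))) (at y0 within U)"
    unfolding g_def
    by (intro tendsto_intros) (use cA cb y0 in \<open>auto simp: continuous_on_def\<close>)
  moreover have "b y0 - A y0 (w y0) = 0"
    unfolding w_def using lin_inv_facts(1)[OF lin[OF y0] inj[OF y0]] by simp
  ultimately have g0: "(g \<longlongrightarrow> 0) (at y0 within U)" by simp
  have "eventually (\<lambda>y. norm (w y - w y0) \<le> g y) (at y0 within U)"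
    using ev evU
  proof eventually_elim
    case (elim y)
    have bd: "(C / 2) * norm x \<le> norm (A y x)" for x
    proof -
      have "C * norm x \<le> norm (A y0 x)" by (rule C(2))
      also have "\<dots> \<le> norm (A y x) + norm (A y0 x - A y x)" by (rule norm_triangle_sub)
      also have "norm (A y0 x - A y x) \<le> e y * norm x"
        using lin_diff_bound[OF lin[OF y0] lin[OF elim(2)], of x]
        by (simp add: e_def norm_minus_commute)
      also have "e y * norm x \<le> (C / 2) * norm x"
        using elim(1) by (intro mult_right_mono) auto
      finally show ?thesis by simp
    qed
    have "A y (w y - w y0) = b y - A y (w y0)"
      using lin_inv_facts(1)[OF lin[OF elim(2)] inj[OF elim(2)]] linear_diff[OF lin[OF elim(2)]]
      unfolding w_def by simp
    then have "(C / 2) * norm (w y - w y0) \<le> norm (b y - A y (w y0))" using bd by metis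
    then show ?case unfolding g_def using C(1) by (simp add: field_simps)
  qed
  then have "((\<lambda>y. w y - w y0) \<longlongrightarrow> 0) (at y0 within U)"
    by (rule Lim_null_comparison) (rule g0)
  then show "((\<lambda>y. inv (A y) (b y)) \<longlongrightarrow> inv (A y0) (b y0)) (at y0 within U)"
    unfolding w_def by (simp add: Lim_null[symmetric])
qed

lemma lin_solve_deriv:
  fixes A :: "'y::euclidean_space \<Rightarrow> 'b::euclidean_space \<Rightarrow> 'b"
  assumes U: "open U" and y0: "y0 \<in> U"
    and lin: "\<And>y. y \<in> U \<Longrightarrow> linear (A y)" and inj: "\<And>y. y \<in> U \<Longrightarrow> inj (A y)"
    and cA: "\<And>u. continuous_on U (\<lambda>y. A y u)"
    and dA: "\<And>i y. i \<in> Basis \<Longrightarrow> y \<in> U \<Longrightarrow> ((\<lambda>y. A y i) has_derivative dA i y) (at y)"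
    and db: "(b has_derivative db) (at y0)"
  shows "((\<lambda>y. inv (A y) (b y)) has_derivative
     (\<lambda>h. inv (A y0) (db h - (\<Sum>i\<in>Basis. (inv (A y0) (b y0) \<bullet> i) *\<^sub>R dA i y0 h)))) (at y0)"
proof -
  define w0 where "w0 = inv (A y0) (b y0)"
  define \<Theta> where "\<Theta> p = (fst p, \<Sum>i\<in>Basis. (snd p \<bullet> i) *\<^sub>R A (fst p) i)" for p :: "'y \<times> 'b"
  define T where "T q = (fst q, \<Sum>i\<in>Basis. (w0 \<bullet> i) *\<^sub>R dA i y0 (fst q) + (snd q \<bullet> i) *\<^sub>R A y0 i)" for q :: "'y \<times> 'b"
  define G where "G p = (fst p, inv (A (fst p)) (snd p))" for p :: "'y \<times> 'b"
  define G' where "G' q = (fst q, inv (A y0) (snd q - (\<Sum>i\<in>Basis. (w0 \<bullet> i) *\<^sub>R dA i y0 (fst q))))" for q :: "'y \<times> 'b"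
  have bl: "bounded_linear (dA i y0)" if "i \<in> Basis" for i
    using dA[OF that y0] has_derivative_bounded_linear by blast
  have li: "bounded_linear (inv (A y0))" using lin_inv_facts(4)[OF lin[OF y0] inj[OF y0]] .
  have G0: "G (y0, b y0) = (y0, w0)" by (simp add: G_def w0_def)
  have dT: "(\<Theta> has_derivative T) (at (y0, w0))"
  proof -
    have d1: "((\<lambda>p. snd p \<bullet> i) has_derivative (\<lambda>q. snd q \<bullet> i)) (at (y0, w0))" for i :: 'b
      by (intro bounded_linear_imp_has_derivative bounded_linear_compose[OF bounded_linear_inner_left bounded_linear_snd])
    have d2: "((\<lambda>p. A (fst p) i) has_derivative (\<lambda>q. dA i y0 (fst q))) (at (y0, w0))" if i: "i \<in> Basis" for i
    proof -
      have "(A (fst (y0, w0)) i) = A y0 i" by simp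
      have "((\<lambda>y. A y i) has_derivative dA i y0) (at (fst (y0, w0)))" using dA[OF i y0] by simp
      from has_derivative_compose[OF bounded_linear_imp_has_derivative[OF bounded_linear_fst] this]
      show ?thesis .
    qed
    have d3: "((\<lambda>p. \<Sum>i\<in>Basis. (snd p \<bullet> i) *\<^sub>R A (fst p) i) has_derivative
       (\<lambda>q. \<Sum>i\<in>Basis. (snd (y0, w0) \<bullet> i) *\<^sub>R dA i y0 (fst q) + (snd q \<bullet> i) *\<^sub>R A (fst (y0, w0)) i)) (at (y0, w0))"
      by (intro has_derivative_sum has_derivative_scaleR d1 d2)
    have d4: "(fst has_derivative fst) (at (y0, w0))"
      by (rule bounded_linear_imp_has_derivative[OF bounded_linear_fst])
    from has_derivative_Pair[OF d4 d3] show ?thesis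
      unfolding \<Theta>_def T_def by simp
  qed
  have dT': "(\<Theta> has_derivative T) (at (G (y0, b y0)))"
    using dT G0 by simp
  have blG': "bounded_linear G'"
  proof -
    have Z: "bounded_linear (\<lambda>q::'y\<times>'b. \<Sum>i\<in>Basis. (w0 \<bullet> i) *\<^sub>R dA i y0 (fst q))"
      by (rule bounded_linear_sum, rule bounded_linear_compose[OF bounded_linear_scaleR_right],
          rule bounded_linear_compose[OF bl bounded_linear_fst])
    have X: "bounded_linear (\<lambda>q::'y\<times>'b. inv (A y0) (snd q - (\<Sum>i\<in>Basis. (w0 \<bullet> i) *\<^sub>R dA i y0 (fst q))))"
      by (rule bounded_linear_compose[OF li bounded_linear_sub[OF bounded_linear_snd Z]])
    show ?thesis unfolding G'_def by (rule bounded_linear_Pair[OF bounded_linear_fst X])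
  qed
  have GT: "G' \<circ> T = id"
  proof
    fix q :: "'y \<times> 'b"
    have "(\<Sum>i\<in>Basis. (snd q \<bullet> i) *\<^sub>R A y0 i) = A y0 (snd q)"
      using linear_basis_expand[OF lin[OF y0]] by metis
    then show "(G' \<circ> T) q = id q"
      by (simp add: G'_def T_def sum.distrib lin_inv_facts(2)[OF lin[OF y0] inj[OF y0]])
  qed
  have cAf: "continuous_on (U \<times> UNIV) (\<lambda>x. A (fst x) u)" for u
    by (rule continuous_on_compose2[OF cA[of u] continuous_on_fst[OF continuous_on_id]]) auto
  have cG: "continuous_on (U \<times> UNIV) G"
    unfolding G_def
  proof (intro continuous_on_Pair continuous_on_fst continuous_on_id)
    show "continuous_on (U \<times> UNIV) (\<lambda>x. inv (A (fst x)) (snd x))"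
      by (rule lin_solve_cont[where A="\<lambda>p. A (fst p)"])
        (auto intro: lin inj continuous_on_snd continuous_on_id cAf)
  qed
  have cG0: "continuous (at (y0, b y0)) G"
    using cG U y0 by (simp add: continuous_on_eq_continuous_at open_Times)
  have ThG: "\<Theta> (G z) = z" if "z \<in> U \<times> UNIV" for z
  proof -
    have "fst z \<in> U" using that by auto
    then show ?thesis
      using linear_basis_expand[OF lin[OF \<open>fst z \<in> U\<close>], of "inv (A (fst z)) (snd z)"]
        lin_inv_facts(1)[OF lin[OF \<open>fst z \<in> U\<close>] inj[OF \<open>fst z \<in> U\<close>]]
      by (simp add: \<Theta>_def G_def)
  qed
  have dG: "(G has_derivative G') (at (y0, b y0))"
    by (rule has_derivative_inverse_basic[OF dT' blG' GT cG0 _ _ ThG]) (use U y0 in \<open>auto simp: open_Times\<close>)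
  have "((\<lambda>y. snd (G (y, b y))) has_derivative (\<lambda>h. snd (G' (h, db h)))) (at y0)"
    by (rule has_derivative_snd[OF has_derivative_compose[OF has_derivative_Pair[OF has_derivative_ident db] dG]])
  then show ?thesis by (simp add: G_def G'_def w0_def)
qed


lemma Ck_diff: "open S \<Longrightarrow> Ck k f S \<Longrightarrow> Ck k g S \<Longrightarrow> Ck k (\<lambda>x. f x - g x) S"
proof -
  assume a: "open S" "Ck k f S" "Ck k g S"
  have "Ck k (\<lambda>x. - g x) S"
    by (rule Ck_linear[OF a(1) bounded_linear_minus[OF bounded_linear_ident] a(3)])
  from Ck_add[OF a(1) a(2) this] show ?thesis by simp
qed

lemma smooth_inverse:
  fixes \<Psi> \<Phi> :: "'b::euclidean_space \<Rightarrow> 'b"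
  assumes Om: "open Om" and U: "open U" and s\<Psi>: "smooth_on Om \<Psi>" and \<Phi>U: "\<Phi> ` U \<subseteq> Om"
    and \<Psi>\<Phi>: "\<And>y. y \<in> U \<Longrightarrow> \<Psi> (\<Phi> y) = y" and c\<Phi>: "continuous_on U \<Phi>"
    and injD: "\<And>z. z \<in> Om \<Longrightarrow> inj (frechet_derivative \<Psi> (at z))"
  shows "smooth_on U \<Phi>"
proof -
  define A where "A y = frechet_derivative \<Psi> (at (\<Phi> y))" for y
  define a where "a u z = frechet_derivative \<Psi> (at z) u" for u z
  have \<Phi>in: "\<Phi> y \<in> Om" if "y \<in> U" for y using \<Phi>U that by blast
  have d\<Psi>: "(\<Psi> has_derivative frechet_derivative \<Psi> (at z)) (at z)" if "z \<in> Om" for z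
    using Ck_der[OF Om smooth_Ck[OF s\<Psi>] that] .
  have linA: "linear (A y)" if "y \<in> U" for y
    using d\<Psi>[OF \<Phi>in[OF that]] has_derivative_linear unfolding A_def by blast
  have injA: "inj (A y)" if "y \<in> U" for y
    using injD[OF \<Phi>in[OF that]] unfolding A_def .
  have sa: "smooth_on Om (a u)" for u unfolding a_def using smooth_D[OF s\<Psi>] .
  have cA: "continuous_on U (\<lambda>y. A y u)" for u
    using Ck_comp[OF U Om _ sa \<Phi>U, of 0] c\<Phi> unfolding A_def a_def by simp
  have d\<Phi>: "(\<Phi> has_derivative inv (A y)) (at y)" if y: "y \<in> U" for y
  proof (rule has_derivative_inverse_basic[where f=\<Psi> and T=U])
    show "(\<Psi> has_derivative A y) (at (\<Phi> y))" unfolding A_def using d\<Psi>[OF \<Phi>in[OF y]] .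
    show "bounded_linear (inv (A y))" using lin_inv_facts(4)[OF linA[OF y] injA[OF y]] .
    show "inv (A y) \<circ> A y = id" using lin_inv_facts(2)[OF linA[OF y] injA[OF y]] by (simp add: fun_eq_iff)
    show "continuous (at y) \<Phi>" using c\<Phi> U y by (simp add: continuous_on_eq_continuous_at)
  qed (use U y \<Psi>\<Phi> in auto)
  have R: "Ck k \<Phi> U \<and> (\<forall>b. Ck k b U \<longrightarrow> Ck k (\<lambda>y. inv (A y) (b y)) U)" for k
  proof (induction k)
    case 0
    show ?case using c\<Phi> lin_solve_cont[OF linA injA cA] by simp
  next
    case (Suc k)
    have \<Phi>k: "Ck k \<Phi> U" and Rk: "\<And>b. Ck k b U \<Longrightarrow> Ck k (\<lambda>y. inv (A y) (b y)) U"
      using Suc.IH by blast+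
    have Rc: "Ck k (\<lambda>y. inv (A y) v) U" for v using Rk[OF Ck_const[OF U]] .
    have \<Phi>S: "Ck (Suc k) \<Phi> U"
      by (rule Ck_SucI[OF U d\<Phi> Rc])
    have dA: "((\<lambda>y. A y i) has_derivative (\<lambda>h. frechet_derivative (a i) (at (\<Phi> y)) (inv (A y) h))) (at y)"
      if "y \<in> U" for i y
    proof -
      have "(a i has_derivative frechet_derivative (a i) (at (\<Phi> y))) (at (\<Phi> y))"
        using Ck_der[OF Om smooth_Ck[OF sa] \<Phi>in[OF that]] .
      from has_derivative_compose[OF d\<Phi>[OF that] this] show ?thesis
        unfolding A_def a_def .
    qed
    have "Ck (Suc k) (\<lambda>y. inv (A y) (b y)) U" if bS: "Ck (Suc k) b U" for b
    proof -
      define w where "w y = inv (A y) (b y)" for y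
      have bk: "Ck k b U" using Ck_Suc_down[OF bS] .
      have wk: "Ck k w U" unfolding w_def using Rk[OF bk] .
      show ?thesis
      proof (rule Ck_SucI[OF U])
        fix y assume y: "y \<in> U"
        show "((\<lambda>y. inv (A y) (b y)) has_derivative (\<lambda>h. inv (A y) (frechet_derivative b (at y) h -
           (\<Sum>i\<in>Basis. (w y \<bullet> i) *\<^sub>R frechet_derivative (a i) (at (\<Phi> y)) (inv (A y) h))))) (at y)"
          unfolding w_def
          by (rule lin_solve_deriv[OF U y linA injA cA dA Ck_der[OF U bS y]])
      next
        fix h
        have lin2: "linear (frechet_derivative (a i) (at z))" if "z \<in> Om" for i z
          by (rule has_derivative_linear[OF Ck_der[OF Om smooth_Ck[OF sa] that]])
        have c1: "Ck k (\<lambda>y. (\<Sum>l\<in>Basis. (inv (A y) h \<bullet> l) *\<^sub>R frechet_derivative (a i) (at (\<Phi> y)) l)) U" for i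
        proof (rule Ck_sum[OF U])
          fix l :: 'b
          show "Ck k (\<lambda>y. (inv (A y) h \<bullet> l) *\<^sub>R frechet_derivative (a i) (at (\<Phi> y)) l) U"
            by (rule Ck_scaleR[OF U Ck_linear[OF U bounded_linear_inner_left Rc] Ck_comp[OF U Om \<Phi>k smooth_D[OF sa] \<Phi>U]])
        qed
        have c2: "Ck k (\<lambda>y. frechet_derivative b (at y) h -
           (\<Sum>i\<in>Basis. (w y \<bullet> i) *\<^sub>R (\<Sum>l\<in>Basis. (inv (A y) h \<bullet> l) *\<^sub>R frechet_derivative (a i) (at (\<Phi> y)) l))) U"
        proof (rule Ck_diff[OF U])
          show "Ck k (\<lambda>y. frechet_derivative b (at y) h) U" using bS by simp
          show "Ck k (\<lambda>y. \<Sum>i\<in>Basis. (w y \<bullet> i) *\<^sub>R (\<Sum>l\<in>Basis. (inv (A y) h \<bullet> l) *\<^sub>R frechet_derivative (a i) (at (\<Phi> y)) l)) U"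
            by (rule Ck_sum[OF U], rule Ck_scaleR[OF U Ck_linear[OF U bounded_linear_inner_left wk] c1])
        qed
        show "Ck k (\<lambda>y. inv (A y) (frechet_derivative b (at y) h -
           (\<Sum>i\<in>Basis. (w y \<bullet> i) *\<^sub>R frechet_derivative (a i) (at (\<Phi> y)) (inv (A y) h)))) U"
        proof (rule Ck_cong[OF U _ Rk[OF c2]])
          fix y assume "y \<in> U"
          then show "inv (A y) (frechet_derivative b (at y) h -
           (\<Sum>i\<in>Basis. (w y \<bullet> i) *\<^sub>R (\<Sum>l\<in>Basis. (inv (A y) h \<bullet> l) *\<^sub>R frechet_derivative (a i) (at (\<Phi> y)) l))) =
             inv (A y) (frechet_derivative b (at y) h -
           (\<Sum>i\<in>Basis. (w y \<bullet> i) *\<^sub>R frechet_derivative (a i) (at (\<Phi> y)) (inv (A y) h)))"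
            using linear_basis_expand[OF lin2[OF \<Phi>in[OF \<open>y \<in> U\<close>]]] by metis
        qed
      qed
    qed
    with \<Phi>S show ?case by blast
  qed
  show ?thesis unfolding smooth_on_def using R by blast
qed


lemma alt_partial: "(\<Sum>i\<le>m. (-1)^i * real (Suc N choose i)) = (-1)^m * real (N choose m)"
proof (induction m)
  case 0 then show ?case by simp
next
  case (Suc m)
  have "(\<Sum>i\<le>Suc m. (-1)^i * real (Suc N choose i)) = (-1)^m * real (N choose m) + (-1)^Suc m * real (Suc N choose Suc m)"
    using Suc by simp
  also have "\<dots> = (-1)^Suc m * real (N choose Suc m)"
    by (simp add: algebra_simps)
  finally show ?case .
qed

lemma alt_half:
  assumes "n \<ge> 1"
  shows "(\<Sum>k=1..n. (-1)^(k+1) * real (2*n choose (n+k))) = real (2*n - 1 choose n)"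
proof -
  define f where "f i = (-1::real)^i * real (2*n choose i)" for i
  have e: "Suc (2*n - 1) = 2*n" using assms by simp
  have full: "(\<Sum>i\<le>2*n. f i) = 0"
    using alt_partial[where m="2*n" and N="2*n-1"] assms unfolding f_def e by simp
  have half: "(\<Sum>i\<le>n. f i) = (-1)^n * real (2*n - 1 choose n)"
    using alt_partial[where m=n and N="2*n-1"] unfolding f_def e by simp
  have split: "(\<Sum>i\<le>2*n. f i) = (\<Sum>i\<le>n. f i) + (\<Sum>k=1..n. f (k + n))"
  proof -
    have "(\<Sum>i\<le>2*n. f i) = (\<Sum>i=0..n+n. f i)" by (simp add: atLeast0AtMost mult_2)
    also have "\<dots> = (\<Sum>i=0..n. f i) + (\<Sum>i=n+1..n+n. f i)" by (rule sum.ub_add_nat) simp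
    also have "(\<Sum>i=n+1..n+n. f i) = (\<Sum>k=1..n. f (k + n))"
      using sum.shift_bounds_cl_nat_ivl[of f 1 n n] by (simp add: add.commute)
    finally show ?thesis by (simp add: atLeast0AtMost)
  qed
  have s: "(\<Sum>k=1..n. f (k + n)) = - ((-1)^n * real (2*n - 1 choose n))"
    using full half split by simp
  have "(\<Sum>k=1..n. (-1)^(k+1) * real (2*n choose (n+k))) = (-1)^(n+1) * (\<Sum>k=1..n. f (k + n))"
  proof -
    have "(-1::real)^(k+1) * real (2*n choose (n+k)) = (-1)^(n+1) * f (k + n)" for k
    proof -
      have "(-1::real)^(n+1) * (-1)^(k+n) = (-1)^(k+1) * ((-1)^n)^2"
        by (simp add: power_add power2_eq_square)
      moreover have "((-1::real)^n)^2 = 1" by (induct n) (auto simp: power2_eq_square)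
      ultimately show ?thesis unfolding f_def by (simp add: add.commute mult.assoc[symmetric])
    qed
    then show ?thesis by (simp add: sum_distrib_left)
  qed
  also have "\<dots> = real (2*n - 1 choose n)"
    unfolding s by (simp add: power_add power2_eq_square[symmetric])
  finally show ?thesis .
qed

lemma pcoef_sum:
  assumes "n \<ge> 1"
  shows "(\<Sum>k=1..n. pcoef n k * (2 * real k)) = 1"
proof -
  have nz: "fact (2*n) \<noteq> (0::real)" by simp
  have c: "real (2*n choose (n+k)) = fact (2*n) / (fact (n+k) * fact (n-k))" if "k \<le> n" for k
  proof -
    have "2*n - (n+k) = n - k" by simp
    then show ?thesis using binomial_fact[of "n+k" "2*n"] that by simp
  qed
  have t: "pcoef n k * (2 * real k) = (2 * ((fact n)^2 / fact (2*n))) * ((-1)^(k+1) * real (2*n choose (n+k)))"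
    if "k \<in> {1..n}" for k
  proof -
    have "k \<le> n" "k \<ge> 1" using that by auto
    then show ?thesis unfolding pcoef_def c[OF \<open>k \<le> n\<close>] using nz by (simp add: field_simps)
  qed
  have "(\<Sum>k=1..n. pcoef n k * (2 * real k)) = (\<Sum>k=1..n. (2 * ((fact n)^2 / fact (2*n))) * ((-1)^(k+1) * real (2*n choose (n+k))))"
    by (rule sum.cong[OF refl t])
  also have "\<dots> = (2 * ((fact n)^2 / fact (2*n))) * (\<Sum>k=1..n. (-1)^(k+1) * real (2*n choose (n+k)))"
    by (rule sum_distrib_left[symmetric])
  also have "\<dots> = 2 * real (2*n - 1 choose n) * ((fact n)^2 / fact (2*n))"
    unfolding alt_half[OF assms] by simp
  also have "2 * real (2*n - 1 choose n) = real (2*n choose n)"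
  proof -
    obtain m where m: "n = Suc m" using assms by (cases n) auto
    have "2*n - 1 = Suc (2*m)" "2*n = Suc (Suc (2*m))" using m by simp_all
    moreover have "(Suc (2*m) choose Suc m) = (Suc (2*m) choose m)"
      using binomial_symmetric[of m "Suc (2*m)"] by simp
    ultimately show ?thesis using m by (simp add: binomial_Suc_Suc)
  qed
  also have "real (2*n choose n) * ((fact n)^2 / fact (2*n)) = 1"
    using c[of 0] nz by (simp add: power2_eq_square)
  finally show ?thesis .
qed


theorem mainTheorem4:
  fixes D D0 :: "'a::euclidean_space set"
    and F G :: "real \<Rightarrow> 'a \<Rightarrow> 'a"
    and \<epsilon>0 :: real
  assumes "open D"
    and "\<epsilon>0 > 0"
    and "smooth_on (D \<times> {-\<epsilon>0<..<\<epsilon>0}) (\<lambda>(x, e). F e x)"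
    and "smooth_on (D \<times> {-\<epsilon>0<..<\<epsilon>0}) (\<lambda>(x, e). G e x)"
    and "\<And>x e. x \<in> D \<Longrightarrow> \<bar>e\<bar> < \<epsilon>0 \<Longrightarrow> F e x = x + e *\<^sub>R G e x"
    and "compact D0" and "D0 \<subseteq> D"
  shows "\<exists>r0 > 0. \<exists>W V. open W \<and> open V \<and> D0 \<subseteq> W \<and> W \<subseteq> V \<and> V \<subseteq> D \<and>
     (\<forall>e. \<bar>e\<bar> < \<epsilon>0 \<and> \<bar>e\<bar> \<le> r0 \<longrightarrow> inj_on (F e) V) \<and>
     (\<forall>x\<in>W. \<forall>n e. \<bar>e\<bar> < \<epsilon>0 \<and> real n * \<bar>e\<bar> \<le> r0 \<longrightarrow>
        (\<forall>k\<le>n. (F e ^^ k) x \<in> V) \<and>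
        (\<forall>k<n. (the_inv_into V (F e) ^^ k) x \<in> F e ` V) \<and>
        (\<forall>k\<le>n. (the_inv_into V (F e) ^^ k) x \<in> V)) \<and>
     (\<forall>n\<ge>1. \<exists>Y :: 'a \<Rightarrow> real \<Rightarrow> 'a.
        smooth_on (W \<times> {e. \<bar>e\<bar> < \<epsilon>0 \<and> real n * \<bar>e\<bar> < r0}) (\<lambda>(x, e). Y x e) \<and>
        (\<forall>x\<in>W. Y x 0 = G 0 x) \<and>
        (\<forall>x\<in>W. \<forall>e. e \<noteq> 0 \<and> \<bar>e\<bar> < \<epsilon>0 \<and> real n * \<bar>e\<bar> < r0 \<longrightarrow>
           Y x e = interp_field F (\<lambda>e. the_inv_into V (F e)) n x e))"
proof -
  note oD = assms(1) and e0 = assms(2) and Feq = assms(5) and cD0 = assms(6) and D0D = assms(7)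
  define I0 where "I0 = {-\<epsilon>0<..<\<epsilon>0}"
  define Fp where "Fp = (\<lambda>q. F (snd q) (fst q))"
  define Gp where "Gp = (\<lambda>q. G (snd q) (fst q))"
  have oDI: "open (D \<times> I0)" unfolding I0_def using oD by (simp add: open_Times)
  have sF: "smooth_on (D \<times> I0) Fp"
    using assms(3) unfolding Fp_def I0_def by (simp add: split_def)
  have sG: "smooth_on (D \<times> I0) Gp"
    using assms(4) unfolding Gp_def I0_def by (simp add: split_def)
  obtain \<delta>0 where \<delta>0: "\<delta>0 > 0" "(\<Union>x\<in>D0. cball x \<delta>0) \<subseteq> D"
    using compact_subset_open_imp_cball_epsilon_subset[OF cD0 oD D0D] by blast
  define \<delta> where "\<delta> = \<delta>0 / 4"
  have \<delta>: "\<delta> > 0" using \<delta>0 unfolding \<delta>_def by simp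
  define K where "K = {y. \<exists>x\<in>D0. dist x y \<le> 4 * \<delta>}"
  have KD: "K \<subseteq> D"
  proof
    fix y assume "y \<in> K"
    then obtain x where x: "x \<in> D0" "dist x y \<le> \<delta>0" unfolding K_def \<delta>_def by auto
    then have "y \<in> cball x \<delta>0" by (simp add: mem_cball)
    then show "y \<in> D" using \<delta>0(2) x(1) by blast
  qed
  have cK: "compact K"
  proof -
    have "K = {x + y | x y. x \<in> D0 \<and> y \<in> cball 0 (4 * \<delta>)}"
      unfolding K_def
    proof (auto simp: dist_norm)
      fix x y assume a: "y \<in> D0" "norm (y - x) \<le> 4 * \<delta>"
      show "\<exists>xa y. x = xa + y \<and> xa \<in> D0 \<and> norm y \<le> 4 * \<delta>"
        by (rule exI[of _ y], rule exI[of _ "x - y"]) (use a in \<open>auto simp: norm_minus_commute\<close>)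
    next
      fix x y :: 'a assume a: "x \<in> D0" "norm y \<le> 4 * \<delta>"
      show "\<exists>z\<in>D0. norm (z - (x + y)) \<le> 4 * \<delta>"
        by (rule bexI[of _ x]) (use a in auto)
    qed
    then show ?thesis using compact_sums[OF cD0 compact_cball[of 0 "4 * \<delta>"]] by (simp add: mem_cball_0)
  qed
  define \<epsilon>1 where "\<epsilon>1 = \<epsilon>0 / 2"
  have \<epsilon>1: "\<epsilon>1 > 0" "\<epsilon>1 < \<epsilon>0" using e0 unfolding \<epsilon>1_def by auto
  define C where "C = K \<times> {-\<epsilon>1..\<epsilon>1}"
  have cC: "compact C" unfolding C_def using cK by (simp add: compact_Times)
  have CD: "C \<subseteq> D \<times> I0" unfolding C_def I0_def using KD \<epsilon>1 by auto
  have contG: "continuous_on C Gp"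
    using smooth_Ck[OF sG, of 0] CD continuous_on_subset by (metis Ck.simps(1))
  obtain M where M: "M > 0" "\<And>p. p \<in> C \<Longrightarrow> norm (Gp p) \<le> M"
    using compact_imp_bounded[OF compact_continuous_image[OF contG cC]] unfolding bounded_pos by auto
  define dG where "dG p = frechet_derivative Gp (at p)" for p
  have dGd: "(Gp has_derivative dG p) (at p)" if "p \<in> D \<times> I0" for p
    unfolding dG_def by (rule Ck_der[OF oDI smooth_Ck[OF sG] that])
  define Lf where "Lf p = (\<Sum>i\<in>Basis. norm (dG p (i, 0)))" for p
  have contL: "continuous_on C Lf"
    unfolding Lf_def
  proof (intro continuous_on_sum continuous_on_norm)
    fix i :: 'a
    have "Ck 0 (\<lambda>p. dG p (i, 0)) (D \<times> I0)"
      using smooth_Ck[OF sG, of 1] unfolding dG_def by simp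
    then show "continuous_on C (\<lambda>p. dG p (i, 0))"
      using CD continuous_on_subset by (metis Ck.simps(1))
  qed
  obtain L where L: "L > 0" "\<And>p. p \<in> C \<Longrightarrow> Lf p \<le> L"
    using compact_imp_bounded[OF compact_continuous_image[OF contL cC]] unfolding bounded_pos
    by (metis imageI real_norm_def abs_le_D1)
  have dGb: "norm (dG p (u, 0)) \<le> L * norm u" if "p \<in> C" for p u
  proof -
    have ld: "bounded_linear (dG p)" using dGd[of p] CD that has_derivative_bounded_linear by blast
    have l1: "linear (\<lambda>u::'a. dG p (u, 0))"
      by (rule bounded_linear.linear, rule bounded_linear_compose[OF ld],
          rule bounded_linear_Pair[OF bounded_linear_ident bounded_linear_zero])
    have "norm (dG p (u, 0) - 0) \<le> (\<Sum>i\<in>Basis. norm (dG p (i, 0) - 0)) * norm u"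
      by (rule lin_diff_bound[OF l1 linear_zero])
    also have "\<dots> \<le> L * norm u" using L(2)[OF that] unfolding Lf_def by (simp add: mult_right_mono)
    finally show ?thesis by simp
  qed
  have Lip: "norm (G e z - G e z') \<le> L * norm (z - z')"
    if S: "convex S" "S \<subseteq> K" and e: "\<bar>e\<bar> \<le> \<epsilon>1" and z: "z \<in> S" "z' \<in> S" for S e z z'
  proof (rule differentiable_bound[OF S(1) _ _ z])
    fix y assume y: "y \<in> S"
    then have yC: "(y, e) \<in> C" using S e unfolding C_def by auto
    have "((\<lambda>y. (y, e)) has_derivative (\<lambda>u. (u, 0))) (at y within S)"
      by (intro has_derivative_Pair has_derivative_ident has_derivative_const)
    from has_derivative_compose[OF this dGd] yC CD
    show "(G e has_derivative (\<lambda>u. dG (y, e) (u, 0))) (at y within S)"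
      unfolding Gp_def by auto
    show "onorm (\<lambda>u. dG (y, e) (u, 0)) \<le> L"
      by (rule onorm_le) (rule dGb[OF yC])
  qed
  define r0 where "r0 = min \<epsilon>1 (min (\<delta> / (4 * M)) (1 / (2 * L)))"
  have r0: "r0 > 0" "r0 \<le> \<epsilon>1" "r0 * M \<le> \<delta> / 4" "r0 * L \<le> 1 / 2"
  proof -
    show "r0 > 0" unfolding r0_def using \<epsilon>1 \<delta> M L by simp
    show "r0 \<le> \<epsilon>1" unfolding r0_def by simp
    have "r0 \<le> \<delta> / (4 * M)" unfolding r0_def by simp
    then show "r0 * M \<le> \<delta> / 4" using M by (simp add: field_simps)
    have "r0 \<le> 1 / (2 * L)" unfolding r0_def by simp
    then show "r0 * L \<le> 1 / 2" using L by (simp add: field_simps)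
  qed
  have small: "\<bar>e\<bar> < \<epsilon>0" "\<bar>e\<bar> \<le> \<epsilon>1" "\<bar>e\<bar> * M \<le> \<delta> / 4" "\<bar>e\<bar> * L \<le> 1 / 2"
    if "\<bar>e\<bar> \<le> r0" for e
  proof -
    show "\<bar>e\<bar> \<le> \<epsilon>1" using that r0 by simp
    then show "\<bar>e\<bar> < \<epsilon>0" using \<epsilon>1 by simp
    show "\<bar>e\<bar> * M \<le> \<delta> / 4" using that r0 M by (meson mult_right_mono order_trans less_imp_le)
    show "\<bar>e\<bar> * L \<le> 1 / 2" using that r0 L by (meson mult_right_mono order_trans less_imp_le)
  qed
  define V where "V = (\<Union>x\<in>D0. ball x (2 * \<delta>))"
  define W where "W = (\<Union>x\<in>D0. ball x \<delta>)"
  have oV: "open V" and oW: "open W" unfolding V_def W_def by auto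
  have D0W: "D0 \<subseteq> W" unfolding W_def using \<delta> by auto
  have WV: "W \<subseteq> V" unfolding W_def V_def using \<delta> by auto
  have VK: "V \<subseteq> K" unfolding V_def K_def using \<delta> by (force simp: mem_ball)
  have VD: "V \<subseteq> D" using VK KD by blast
  have Gb: "norm (G e z) \<le> M" if "z \<in> K" "\<bar>e\<bar> \<le> \<epsilon>1" for e z
    using M(2)[of "(z, e)"] that unfolding C_def Gp_def by (auto simp: abs_le_iff)
  have inj: "inj_on (F e) V" if e: "\<bar>e\<bar> \<le> r0" for e
  proof (rule inj_onI)
    fix x y assume xy: "x \<in> V" "y \<in> V" "F e x = F e y"
    have eq: "x - y = e *\<^sub>R (G e y - G e x)"
    proof -
      have "x \<in> D" "y \<in> D" using xy VD by auto
      then have "x + e *\<^sub>R G e x = y + e *\<^sub>R G e y"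
        using xy(3) Feq[of x e] Feq[of y e] small(1)[OF e] by metis
      then show ?thesis by (simp add: algebra_simps)
    qed
    show "x = y"
    proof (cases "norm (x - y) \<le> \<delta>")
      case True
      obtain x0 where x0: "x0 \<in> D0" "dist x0 x < 2 * \<delta>" using xy(1) unfolding V_def by auto
      have yc: "y \<in> cball x0 (3 * \<delta>)"
      proof -
        have "norm (x0 - y) \<le> norm (x0 - x) + norm (x - y)" by (rule norm_diff_triangle_le[of x0 x _ y]) simp_all
        then show ?thesis using x0 True by (simp add: mem_cball dist_norm)
      qed
      have S: "cball x0 (3 * \<delta>) \<subseteq> K" unfolding K_def using x0 \<delta> by (force simp: mem_cball)
      have xc: "x \<in> cball x0 (3 * \<delta>)" using x0 \<delta> by (simp add: mem_cball)
      have "norm (x - y) = \<bar>e\<bar> * norm (G e y - G e x)" using eq by simp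
      also have "\<dots> \<le> \<bar>e\<bar> * (L * norm (y - x))"
        using Lip[OF convex_cball S small(2)[OF e] yc xc] by (simp add: mult_left_mono)
      also have "\<dots> = (\<bar>e\<bar> * L) * norm (x - y)" by (simp add: norm_minus_commute)
      also have "\<dots> \<le> (1/2) * norm (x - y)" using small(4)[OF e] by (intro mult_right_mono) auto
      finally show ?thesis by simp
    next
      case False
      have "norm (x - y) = \<bar>e\<bar> * norm (G e y - G e x)" using eq by simp
      also have "\<dots> \<le> \<bar>e\<bar> * (M + M)"
      proof -
        have "norm (G e y) \<le> M" "norm (G e x) \<le> M" using Gb[of x e] Gb[of y e] xy VK small(2)[OF e] by auto
        then have "norm (G e y - G e x) \<le> M + M" using norm_triangle_ineq4[of "G e y" "G e x"] by linarith
        then show ?thesis by (intro mult_left_mono) auto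
      qed
      also have "\<dots> \<le> \<delta> / 2" using small(3)[OF e] by simp
      finally show ?thesis using False \<delta> by simp
    qed
  qed
  have pre: "\<exists>z. dist x0 z < 2 * \<delta> \<and> F e z = y \<and> norm (z - y) \<le> \<bar>e\<bar> * M"
    if e: "\<bar>e\<bar> \<le> r0" and x0: "x0 \<in> D0" and y: "dist x0 y < 3 * \<delta> / 2" for e x0 y
  proof -
    define S where "S = cball y (\<delta> / 4)"
    define T where "T z = y - e *\<^sub>R G e z" for z
    have Sd: "dist x0 z < 2 * \<delta>" if "z \<in> S" for z
    proof -
      have "dist x0 z \<le> dist x0 y + dist y z" by (rule dist_triangle)
      then show ?thesis using that y \<delta> unfolding S_def by (simp add: mem_cball)
    qed
    have SK: "S \<subseteq> K" unfolding K_def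
    proof (rule subsetI, rule CollectI)
      fix z assume "z \<in> S"
      show "\<exists>x\<in>D0. dist x z \<le> 4 * \<delta>" using Sd[OF \<open>z \<in> S\<close>] x0 \<delta> by (intro bexI[of _ x0]) auto
    qed
    have TS: "T ` S \<subseteq> S"
    proof
      fix u assume "u \<in> T ` S"
      then obtain z where z: "z \<in> S" "u = T z" by auto
      have "dist y u = \<bar>e\<bar> * norm (G e z)" unfolding z(2) T_def by (simp add: dist_norm)
      also have "\<dots> \<le> \<bar>e\<bar> * M" using SK z(1) small(2)[OF e] by (intro mult_left_mono Gb) auto
      also have "\<dots> \<le> \<delta> / 4" using small(3)[OF e] .
      finally show "u \<in> S" unfolding S_def by (simp add: mem_cball)
    qed
    have lip: "dist (T z) (T z') \<le> (1/2) * dist z z'" if "z \<in> S" "z' \<in> S" for z z'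
    proof -
      have "dist (T z) (T z') = \<bar>e\<bar> * norm (G e z - G e z')"
        unfolding T_def dist_norm by (simp add: algebra_simps norm_minus_commute flip: scaleR_diff_right)
      also have "\<dots> \<le> \<bar>e\<bar> * (L * norm (z - z'))"
        using Lip[of S e z z'] that SK small(2)[OF e] unfolding S_def by (auto intro: mult_left_mono)
      also have "\<dots> = (\<bar>e\<bar> * L) * dist z z'" by (simp add: dist_norm)
      also have "\<dots> \<le> (1/2) * dist z z'" using small(4)[OF e] by (intro mult_right_mono) auto
      finally show ?thesis .
    qed
    have "\<exists>!z\<in>S. T z = z"
      by (rule Banach_fix[OF _ _ _ _ TS lip]) (use \<delta> in \<open>auto simp: S_def complete_eq_closed\<close>)
    then obtain z where z: "z \<in> S" "T z = z" by blast
    have zD: "z \<in> D" using SK z(1) KD by blast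
    have Fz: "F e z = y" using Feq[OF zD small(1)[OF e]] z(2) unfolding T_def by (simp add: algebra_simps)
    have "norm (z - y) = \<bar>e\<bar> * norm (G e z)"
      using z(2) unfolding T_def by (metis add_diff_cancel_left' norm_minus_cancel norm_scaleR diff_conv_add_uminus)
    also have "\<dots> \<le> \<bar>e\<bar> * M" using SK z(1) small(2)[OF e] by (intro mult_left_mono Gb) auto
    finally show ?thesis using Sd[OF z(1)] Fz by blast
  qed
  define Fi where "Fi e = the_inv_into V (F e)" for e
  have near: "y \<in> V" "y \<in> K" "dist x0 y < 3 * \<delta> / 2"
    if "x0 \<in> D0" "dist x0 x < \<delta>" "norm (y - x) \<le> \<delta> / 4" for x0 x y
  proof -
    have "dist x0 y \<le> dist x0 x + dist x y" by (rule dist_triangle)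
    then show d: "dist x0 y < 3 * \<delta> / 2" using that \<delta> by (simp add: dist_norm norm_minus_commute)
    then show "y \<in> V" unfolding V_def using that(1) \<delta> by force
    then show "y \<in> K" using VK by blast
  qed
  have kM: "real k * \<bar>e\<bar> * M \<le> \<delta> / 4" if "real k * \<bar>e\<bar> \<le> r0" for k e
    using mult_right_mono[OF that, of M] M r0 by linarith
  have fwd: "norm ((F e ^^ k) x - x) \<le> real k * \<bar>e\<bar> * M"
    if x0: "x0 \<in> D0" "dist x0 x < \<delta>" and e: "\<bar>e\<bar> \<le> r0" and k: "real k * \<bar>e\<bar> \<le> r0" for x0 x e k
    using k
  proof (induction k)
    case 0 then show ?case by simp
  next
    case (Suc k)
    have k: "real k * \<bar>e\<bar> \<le> r0" using Suc.prems by (smt (verit) abs_ge_zero mult_right_mono of_nat_Suc of_nat_0_le_iff)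
    define y where "y = (F e ^^ k) x"
    have IH: "norm (y - x) \<le> real k * \<bar>e\<bar> * M" using Suc.IH[OF k] unfolding y_def .
    have yK: "y \<in> K" and yD: "y \<in> D" using near(2)[OF x0 order_trans[OF IH kM[OF k]]] KD by auto
    have "(F e ^^ Suc k) x - x = (y - x) + e *\<^sub>R G e y"
      using Feq[OF yD small(1)[OF e]] unfolding y_def by simp
    then have "norm ((F e ^^ Suc k) x - x) \<le> norm (y - x) + \<bar>e\<bar> * norm (G e y)"
      by (metis norm_scaleR norm_triangle_ineq)
    also have "\<dots> \<le> real k * \<bar>e\<bar> * M + \<bar>e\<bar> * M"
      using IH Gb[OF yK small(2)[OF e]] by (intro add_mono mult_left_mono) auto
    finally show ?case by (simp add: algebra_simps)
  qed
  have bwd: "norm ((Fi e ^^ k) x - x) \<le> real k * \<bar>e\<bar> * M"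
    if x0: "x0 \<in> D0" "dist x0 x < \<delta>" and e: "\<bar>e\<bar> \<le> r0" and k: "real k * \<bar>e\<bar> \<le> r0" for x0 x e k
    using k
  proof (induction k)
    case 0 then show ?case by simp
  next
    case (Suc k)
    have k: "real k * \<bar>e\<bar> \<le> r0" using Suc.prems by (smt (verit) abs_ge_zero mult_right_mono of_nat_Suc of_nat_0_le_iff)
    define y where "y = (Fi e ^^ k) x"
    have IH: "norm (y - x) \<le> real k * \<bar>e\<bar> * M" using Suc.IH[OF k] unfolding y_def .
    obtain z where z: "dist x0 z < 2 * \<delta>" "F e z = y" "norm (z - y) \<le> \<bar>e\<bar> * M"
      using pre[OF e x0(1) near(3)[OF x0 order_trans[OF IH kM[OF k]]]] by blast
    have zV: "z \<in> V" unfolding V_def using z(1) x0(1) by force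
    have "(Fi e ^^ Suc k) x = z"
      using the_inv_into_f_f[OF inj[OF e] zV] z(2) unfolding y_def Fi_def by simp
    moreover have "norm (z - x) \<le> norm (z - y) + norm (y - x)" by (rule norm_diff_triangle_le[of z y _ x]) simp_all
    ultimately show ?case using z(3) IH by (simp add: algebra_simps)
  qed
  have part_inj: "\<forall>e. \<bar>e\<bar> < \<epsilon>0 \<and> \<bar>e\<bar> \<le> r0 \<longrightarrow> inj_on (F e) V" using inj by blast
  have ek: "real k * \<bar>e\<bar> \<le> r0" if "k \<le> n" "real n * \<bar>e\<bar> \<le> r0" for k n e
    using mult_right_mono[of "real k" "real n" "\<bar>e\<bar>"] that by simp
  have e1: "\<bar>e\<bar> \<le> r0" if "n \<ge> 1" "real n * \<bar>e\<bar> \<le> r0" for n e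
    using ek[of 1 n e] that by simp
  have bwU: "(Fi e ^^ k) x \<in> F e ` V"
    if x0: "x0 \<in> D0" "dist x0 x < \<delta>" and e: "\<bar>e\<bar> \<le> r0" and k: "real k * \<bar>e\<bar> \<le> r0" for x0 x e k
  proof -
    obtain z where z: "dist x0 z < 2 * \<delta>" "F e z = (Fi e ^^ k) x"
      using pre[OF e x0(1) near(3)[OF x0 order_trans[OF bwd[OF x0 e k] kM[OF k]]]] by blast
    have "z \<in> V" unfolding V_def using z(1) x0(1) by force
    then show ?thesis using z(2) by force
  qed
  have part_iter: "\<forall>x\<in>W. \<forall>n e. \<bar>e\<bar> < \<epsilon>0 \<and> real n * \<bar>e\<bar> \<le> r0 \<longrightarrow>
        (\<forall>k\<le>n. (F e ^^ k) x \<in> V) \<and>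
        (\<forall>k<n. (the_inv_into V (F e) ^^ k) x \<in> F e ` V) \<and>
        (\<forall>k\<le>n. (the_inv_into V (F e) ^^ k) x \<in> V)"
  proof (intro ballI allI impI)
    fix x n e assume x: "x \<in> W" and ne: "\<bar>e\<bar> < \<epsilon>0 \<and> real n * \<bar>e\<bar> \<le> r0"
    obtain x0 where x0: "x0 \<in> D0" "dist x0 x < \<delta>" using x unfolding W_def by auto
    show "(\<forall>k\<le>n. (F e ^^ k) x \<in> V) \<and>
        (\<forall>k<n. (the_inv_into V (F e) ^^ k) x \<in> F e ` V) \<and>
        (\<forall>k\<le>n. (the_inv_into V (F e) ^^ k) x \<in> V)"
    proof (cases "n = 0")
      case True
      then show ?thesis using x WV by auto
    next
      case False
      then have e: "\<bar>e\<bar> \<le> r0" using e1[of n e] ne by simp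
      have "(F e ^^ k) x \<in> V" if "k \<le> n" for k
        using near(1)[OF x0 order_trans[OF fwd[OF x0 e ek[OF that]] kM[OF ek[OF that]]]] ne by simp
      moreover have "(Fi e ^^ k) x \<in> F e ` V" if "k \<le> n" for k
        using bwU[OF x0 e ek[OF that]] ne by simp
      moreover have "(Fi e ^^ k) x \<in> V" if "k \<le> n" for k
        using near(1)[OF x0 order_trans[OF bwd[OF x0 e ek[OF that]] kM[OF ek[OF that]]]] ne by simp
      ultimately show ?thesis unfolding Fi_def by auto
    qed
  qed
  have part_smooth: "\<exists>Y :: 'a \<Rightarrow> real \<Rightarrow> 'a.
        smooth_on (W \<times> {e. \<bar>e\<bar> < \<epsilon>0 \<and> real n * \<bar>e\<bar> < r0}) (\<lambda>(x, e). Y x e) \<and>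
        (\<forall>x\<in>W. Y x 0 = G 0 x) \<and>
        (\<forall>x\<in>W. \<forall>e. e \<noteq> 0 \<and> \<bar>e\<bar> < \<epsilon>0 \<and> real n * \<bar>e\<bar> < r0 \<longrightarrow>
           Y x e = interp_field F (\<lambda>e. the_inv_into V (F e)) n x e)" if n1: "n \<ge> 1" for n
  proof -
    define E where "E = {e. \<bar>e\<bar> < \<epsilon>0 \<and> real n * \<bar>e\<bar> < r0}"
    define S where "S = W \<times> E"
    have oE: "open E" unfolding E_def
      by (intro open_Collect_conj open_Collect_less continuous_intros)
    have oS: "open S" unfolding S_def using oW oE by (simp add: open_Times)
    have Eprop: "\<bar>e\<bar> < r0" "\<bar>e\<bar> \<le> r0" "\<bar>e\<bar> < \<epsilon>0" "real n * \<bar>e\<bar> \<le> r0" if "e \<in> E" for e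
    proof -
      have "\<bar>e\<bar> \<le> real n * \<bar>e\<bar>" using n1 mult_right_mono[of 1 "real n" "\<bar>e\<bar>"] by simp
      then show "\<bar>e\<bar> < r0" "\<bar>e\<bar> \<le> r0" using that unfolding E_def by auto
      show "\<bar>e\<bar> < \<epsilon>0" "real n * \<bar>e\<bar> \<le> r0" using that unfolding E_def by auto
    qed
    have Sprop: "\<exists>x0\<in>D0. dist x0 (fst p) < \<delta>" "snd p \<in> E" if "p \<in> S" for p
      using that unfolding S_def W_def by auto
    define Om where "Om = V \<times> {-r0<..<r0}"
    have oOm: "open Om" unfolding Om_def using oV by (simp add: open_Times)
    have OmD: "Om \<subseteq> D \<times> I0" unfolding Om_def I0_def using VD r0 \<epsilon>1 by auto
    have OmC: "Om \<subseteq> C" unfolding Om_def C_def using VK r0 by auto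
    define \<Psi> where "\<Psi> p = (Fp p, snd p)" for p
    have s\<Psi>: "smooth_on Om \<Psi>"
      unfolding smooth_on_def \<Psi>_def
      by (intro allI Ck_pair[OF oOm Ck_subset[OF smooth_Ck[OF sF] OmD] Ck_linear[OF oOm bounded_linear_snd Ck_id[OF oOm]]])
    have eqF: "fst q + snd q *\<^sub>R Gp q = Fp q" if "q \<in> D \<times> I0" for q
      using Feq[of "fst q" "snd q"] that unfolding Fp_def Gp_def I0_def by (auto simp: abs_less_iff)
    have dinj: "inj (frechet_derivative \<Psi> (at p))" if p: "p \<in> Om" for p
    proof -
      have pD: "p \<in> D \<times> I0" using p OmD by blast
      define Lp where "Lp h = (fst h + (snd p *\<^sub>R dG p h + snd h *\<^sub>R Gp p), snd h)" for h
      have dR: "((\<lambda>q. fst q + snd q *\<^sub>R Gp q) has_derivative (\<lambda>h. fst h + (snd p *\<^sub>R dG p h + snd h *\<^sub>R Gp p))) (at p)"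
        by (rule has_derivative_add[OF has_derivative_fst[OF has_derivative_ident]
              has_derivative_scaleR[OF has_derivative_snd[OF has_derivative_ident] dGd[OF pD]]])
      have dF: "(Fp has_derivative (\<lambda>h. fst h + (snd p *\<^sub>R dG p h + snd h *\<^sub>R Gp p))) (at p)"
        by (rule has_derivative_transform_within_open[OF dR oDI pD eqF])
      have d\<Psi>: "(\<Psi> has_derivative Lp) (at p)"
        unfolding \<Psi>_def Lp_def by (rule has_derivative_Pair[OF dF has_derivative_snd[OF has_derivative_ident]])
      have fe: "frechet_derivative \<Psi> (at p) = Lp" using frechet_derivative_at[OF d\<Psi>] by simp
      have lin: "linear Lp" using d\<Psi> has_derivative_linear by blast
      have pC: "p \<in> C" using p OmC by blast
      have sp: "\<bar>snd p\<bar> \<le> r0" using p unfolding Om_def by auto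
      have "h = 0" if h: "Lp h = 0" for h
      proof -
        obtain u s where hus: "h = (u, s)" by (cases h)
        have s0: "s = 0" using h unfolding Lp_def hus by (simp add: zero_prod_def)
        have "u + snd p *\<^sub>R dG p (u, 0) = 0" using h unfolding Lp_def hus s0 by (simp add: zero_prod_def)
        then have "u = - (snd p *\<^sub>R dG p (u, 0))" by (simp add: eq_neg_iff_add_eq_0)
        then have "norm u = \<bar>snd p\<bar> * norm (dG p (u, 0))" by (metis norm_minus_cancel norm_scaleR)
        also have "\<dots> \<le> \<bar>snd p\<bar> * (L * norm u)" by (rule mult_left_mono[OF dGb[OF pC]]) simp
        also have "\<dots> = (\<bar>snd p\<bar> * L) * norm u" by simp
        also have "\<dots> \<le> (1/2) * norm u" using small(4)[OF sp] by (intro mult_right_mono) auto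
        finally have "u = 0" by simp
        then show ?thesis using hus s0 by (simp add: zero_prod_def)
      qed
      then show ?thesis unfolding fe using linear_injective_0[OF lin] by blast
    qed
    have c\<Psi>: "continuous_on Om \<Psi>" using smooth_Ck[OF s\<Psi>, of 0] by simp
    have \<Psi>eq: "\<Psi> (x, e) = (F e x, e)" for x e unfolding \<Psi>_def Fp_def by simp
    have inj\<Psi>: "inj_on \<Psi> Om"
    proof (rule inj_onI)
      fix p q assume pq: "p \<in> Om" "q \<in> Om" "\<Psi> p = \<Psi> q"
      obtain x e where p: "p = (x, e)" by (cases p)
      obtain y e' where q: "q = (y, e')" by (cases q)
      have ee: "e' = e" using pq(3) unfolding p q \<Psi>eq by simp
      have "x \<in> V" "y \<in> V" "\<bar>e\<bar> \<le> r0" using pq(1,2) unfolding p q Om_def by auto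
      moreover have "F e x = F e y" using pq(3) unfolding p q \<Psi>eq ee by simp
      ultimately have "x = y" using inj[of e] by (auto dest: inj_onD)
      then show "p = q" using p q ee by simp
    qed
    define U where "U = \<Psi> ` Om"
    have oU: "open U" unfolding U_def by (rule invariance_of_domain[OF c\<Psi> oOm inj\<Psi>])
    define \<Phi> where "\<Phi> q = (Fi (snd q) (fst q), snd q)" for q
    have \<Phi>\<Psi>: "\<Phi> (\<Psi> p) = p" if "p \<in> Om" for p
    proof -
      obtain x e where p: "p = (x, e)" by (cases p)
      have "x \<in> V" "\<bar>e\<bar> \<le> r0" using that unfolding p Om_def by auto
      then show ?thesis unfolding p \<Psi>eq \<Phi>_def Fi_def using the_inv_into_f_f[OF inj] by simp
    qed
    have c\<Phi>: "continuous_on U \<Phi>" unfolding U_def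
      by (rule continuous_on_inverse_open[OF oOm c\<Psi> _ \<Phi>\<Psi>]) simp
    have \<Phi>U: "\<Phi> ` U \<subseteq> Om" unfolding U_def using \<Phi>\<Psi> by auto
    have \<Psi>\<Phi>: "\<Psi> (\<Phi> q) = q" if "q \<in> U" for q using that \<Phi>\<Psi> unfolding U_def by auto
    have s\<Phi>: "smooth_on U \<Phi>" by (rule smooth_inverse[OF oOm oU s\<Psi> \<Phi>U \<Psi>\<Phi> c\<Phi> dinj])
    have sB: "smooth_on U (\<lambda>q. Fi (snd q) (fst q))"
      unfolding smooth_on_def
    proof
      fix k
      show "Ck k (\<lambda>q. Fi (snd q) (fst q)) U"
        using Ck_linear[OF oU bounded_linear_fst smooth_Ck[OF s\<Phi>, of k]] unfolding \<Phi>_def by simp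
    qed
    define fw where "fw j p = (F (snd p) ^^ j) (fst p)" for j p
    define bw where "bw j p = (Fi (snd p) ^^ j) (fst p)" for j p
    have fwV: "fw j p \<in> V" if jn: "j \<le> n" and pS: "p \<in> S" for j p
    proof -
      obtain x0 where x0: "x0 \<in> D0" "dist x0 (fst p) < \<delta>" using Sprop(1)[OF pS] by blast
      have e: "\<bar>snd p\<bar> \<le> r0" "real n * \<bar>snd p\<bar> \<le> r0" using Eprop Sprop(2)[OF pS] by auto
      show ?thesis unfolding fw_def
        using near(1)[OF x0 order_trans[OF fwd[OF x0 e(1) ek[OF jn e(2)]] kM[OF ek[OF jn e(2)]]]] .
    qed
    have bwV: "bw j p \<in> V" "(bw j p, snd p) \<in> U" "bw j p \<in> F (snd p) ` V" if jn: "j \<le> n" and pS: "p \<in> S" for j p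
    proof -
      obtain x0 where x0: "x0 \<in> D0" "dist x0 (fst p) < \<delta>" using Sprop(1)[OF pS] by blast
      have e: "\<bar>snd p\<bar> \<le> r0" "real n * \<bar>snd p\<bar> \<le> r0" "\<bar>snd p\<bar> < r0" using Eprop Sprop(2)[OF pS] by auto
      have b: "norm (bw j p - fst p) \<le> \<delta> / 4"
        unfolding bw_def using order_trans[OF bwd[OF x0 e(1) ek[OF jn e(2)]] kM[OF ek[OF jn e(2)]]] .
      show "bw j p \<in> V" using near(1)[OF x0 b] .
      obtain z where z: "dist x0 z < 2 * \<delta>" "F (snd p) z = bw j p"
        using pre[OF e(1) x0(1) near(3)[OF x0 b]] by blast
      have zV: "z \<in> V" unfolding V_def using z(1) x0(1) by force
      then have "(z, snd p) \<in> Om" unfolding Om_def using e(3) by auto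
      then show "(bw j p, snd p) \<in> U" unfolding U_def using \<Psi>eq[of z "snd p"] z(2) by force
      show "bw j p \<in> F (snd p) ` V" using zV z(2) by force
    qed
    have SI: "snd p \<in> I0" if "p \<in> S" for p using Eprop(3)[OF Sprop(2)[OF that]] unfolding I0_def by (auto simp: abs_less_iff)
    have fwC: "Ck k (fw j) S" if "j \<le> n" for j k
      using that
    proof (induction j)
      case 0
      show ?case unfolding fw_def using Ck_linear[OF oS bounded_linear_fst Ck_id[OF oS]] by simp
    next
      case (Suc j)
      have g: "Ck k (\<lambda>p. (fw j p, snd p)) S"
        by (rule Ck_pair[OF oS Suc.IH Ck_linear[OF oS bounded_linear_snd Ck_id[OF oS]]]) (use Suc.prems in simp)
      have im: "(\<lambda>p. (fw j p, snd p)) ` S \<subseteq> D \<times> I0" using fwV[of j] Suc.prems VD SI by auto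
      have "Ck k (\<lambda>p. Fp (fw j p, snd p)) S" by (rule Ck_comp[OF oS oDI g sF im])
      moreover have "(\<lambda>p. Fp (fw j p, snd p)) = fw (Suc j)" unfolding Fp_def fw_def by auto
      ultimately show ?case by simp
    qed
    have bwC: "Ck k (bw j) S" if "j \<le> n" for j k
      using that
    proof (induction j)
      case 0
      show ?case unfolding bw_def using Ck_linear[OF oS bounded_linear_fst Ck_id[OF oS]] by simp
    next
      case (Suc j)
      have g: "Ck k (\<lambda>p. (bw j p, snd p)) S"
        by (rule Ck_pair[OF oS Suc.IH Ck_linear[OF oS bounded_linear_snd Ck_id[OF oS]]]) (use Suc.prems in simp)
      have im: "(\<lambda>p. (bw j p, snd p)) ` S \<subseteq> U" using bwV(2)[of j] Suc.prems by auto
      have "Ck k (\<lambda>p. Fi (snd (bw j p, snd p)) (fst (bw j p, snd p))) S" by (rule Ck_comp[OF oS oU g sB im])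
      moreover have "(\<lambda>p. Fi (snd (bw j p, snd p)) (fst (bw j p, snd p))) = bw (Suc j)" unfolding bw_def by auto
      ultimately show ?case by simp
    qed
    define Y where "Y x e = (\<Sum>k\<in>{1..n}. pcoef n k *\<^sub>R ((\<Sum>j<k. G e (fw j (x, e))) + (\<Sum>j\<in>{1..k}. G e (bw j (x, e)))))" for x e
    have sY: "smooth_on S (\<lambda>(x, e). Y x e)"
      unfolding smooth_on_def
    proof
      fix k
      have GfC: "Ck k (\<lambda>p. Gp (fw j p, snd p)) S" if "j \<le> n" for j
      proof (rule Ck_comp[OF oS oDI _ sG])
        show "Ck k (\<lambda>p. (fw j p, snd p)) S"
          by (rule Ck_pair[OF oS fwC[OF that] Ck_linear[OF oS bounded_linear_snd Ck_id[OF oS]]])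
        show "(\<lambda>p. (fw j p, snd p)) ` S \<subseteq> D \<times> I0" using fwV[OF that] VD SI by auto
      qed
      have GbC: "Ck k (\<lambda>p. Gp (bw j p, snd p)) S" if "j \<le> n" for j
      proof (rule Ck_comp[OF oS oDI _ sG])
        show "Ck k (\<lambda>p. (bw j p, snd p)) S"
          by (rule Ck_pair[OF oS bwC[OF that] Ck_linear[OF oS bounded_linear_snd Ck_id[OF oS]]])
        show "(\<lambda>p. (bw j p, snd p)) ` S \<subseteq> D \<times> I0" using bwV(1)[OF that] VD SI by auto
      qed
      have "Ck k (\<lambda>p. \<Sum>k\<in>{1..n}. pcoef n k *\<^sub>R ((\<Sum>j<k. Gp (fw j p, snd p)) + (\<Sum>j\<in>{1..k}. Gp (bw j p, snd p)))) S"
      proof (rule Ck_sum[OF oS])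
        fix i assume i: "i \<in> {1..n}"
        show "Ck k (\<lambda>p. pcoef n i *\<^sub>R ((\<Sum>j<i. Gp (fw j p, snd p)) + (\<Sum>j\<in>{1..i}. Gp (bw j p, snd p)))) S"
        proof (rule Ck_scaleR[OF oS Ck_const[OF oS]], rule Ck_add[OF oS])
          show "Ck k (\<lambda>p. \<Sum>j<i. Gp (fw j p, snd p)) S"
            by (rule Ck_sum[OF oS], rule GfC) (use i in auto)
          show "Ck k (\<lambda>p. \<Sum>j\<in>{1..i}. Gp (bw j p, snd p)) S"
            by (rule Ck_sum[OF oS], rule GbC) (use i in auto)
        qed
      qed
      moreover have "(\<lambda>p. \<Sum>k\<in>{1..n}. pcoef n k *\<^sub>R ((\<Sum>j<k. Gp (fw j p, snd p)) + (\<Sum>j\<in>{1..k}. Gp (bw j p, snd p)))) = (\<lambda>(x, e). Y x e)"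
        unfolding Y_def Gp_def by (auto simp: fun_eq_iff)
      ultimately show "Ck k (\<lambda>(x, e). Y x e) S" by simp
    qed
    have Y0: "Y x 0 = G 0 x" if x: "x \<in> W" for x
    proof -
      have xV: "x \<in> V" using x WV by blast
      have xD: "x \<in> D" using xV VD by blast
      have F0: "F 0 x = x" using Feq[OF xD] e0 by simp
      have f0: "fw j (x, 0) = x" for j
        unfolding fw_def by (induction j) (simp_all add: F0)
      have Fi0: "Fi 0 x = x" using the_inv_into_f_f[OF inj[of 0] xV] r0 F0 unfolding Fi_def by simp
      have b0: "bw j (x, 0) = x" for j
        unfolding bw_def by (induction j) (simp_all add: Fi0)
      have "Y x 0 = (\<Sum>k\<in>{1..n}. pcoef n k *\<^sub>R (real k *\<^sub>R G 0 x + real k *\<^sub>R G 0 x))"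
        unfolding Y_def f0 b0 by (simp add: sum_constant_scaleR)
      also have "\<dots> = (\<Sum>k\<in>{1..n}. (pcoef n k * (2 * real k)) *\<^sub>R G 0 x)"
        by (intro sum.cong refl) (simp add: scaleR_add_left[symmetric] algebra_simps)
      also have "\<dots> = (\<Sum>k\<in>{1..n}. pcoef n k * (2 * real k)) *\<^sub>R G 0 x"
        by (simp add: scaleR_sum_left)
      also have "\<dots> = G 0 x" using pcoef_sum[OF n1] by simp
      finally show ?thesis .
    qed
    have Ye: "Y x e = interp_field F (\<lambda>e. the_inv_into V (F e)) n x e"
      if x: "x \<in> W" and e: "e \<noteq> 0" "\<bar>e\<bar> < \<epsilon>0" "real n * \<bar>e\<bar> < r0" for x e
    proof -
      have pS: "(x, e) \<in> S" unfolding S_def E_def using x e by auto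
      have er: "\<bar>e\<bar> \<le> r0" using Eprop(2)[of e] e unfolding E_def by auto
      have tf: "(F e ^^ k) x - x = e *\<^sub>R (\<Sum>j<k. G e (fw j (x, e)))" if "k \<le> n" for k
        using that
      proof (induction k)
        case 0 then show ?case by simp
      next
        case (Suc k)
        have yD: "fw k (x, e) \<in> D" using fwV[of k "(x, e)"] Suc.prems pS VD by auto
        have "(F e ^^ Suc k) x = fw k (x, e) + e *\<^sub>R G e (fw k (x, e))"
          using Feq[OF yD e(2)] unfolding fw_def by simp
        moreover have "fw k (x, e) = (F e ^^ k) x" unfolding fw_def by simp
        ultimately show ?case using Suc by (simp add: algebra_simps)
      qed
      have tb: "x - (Fi e ^^ k) x = e *\<^sub>R (\<Sum>j\<in>{1..k}. G e (bw j (x, e)))" if "k \<le> n" for k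
        using that
      proof (induction k)
        case 0 then show ?case by simp
      next
        case (Suc k)
        define y where "y = (Fi e ^^ k) x"
        define z where "z = (Fi e ^^ Suc k) x"
        have y1: "y \<in> F e ` V" using bwV(3)[of k "(x, e)"] Suc.prems pS unfolding y_def bw_def by auto
        have zy: "z = Fi e y" unfolding z_def y_def by simp
        have Fz: "F e z = y" unfolding zy Fi_def by (rule f_the_inv_into_f[OF inj[OF er] y1])
        have zD: "z \<in> D" using bwV(1)[of "Suc k" "(x, e)"] Suc.prems pS VD unfolding z_def bw_def by auto
        have yz: "y - z = e *\<^sub>R G e z" using Feq[OF zD e(2)] Fz by simp
        have bz: "bw (Suc k) (x, e) = z" unfolding z_def bw_def by simp
        have IH: "x - y = e *\<^sub>R (\<Sum>j\<in>{1..k}. G e (bw j (x, e)))" using Suc.IH Suc.prems unfolding y_def by simp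
        have "x - (Fi e ^^ Suc k) x = (x - y) + (y - z)" unfolding z_def by simp
        also have "\<dots> = e *\<^sub>R (\<Sum>j\<in>{1..k}. G e (bw j (x, e))) + e *\<^sub>R G e z" unfolding IH yz ..
        also have "\<dots> = e *\<^sub>R (\<Sum>j\<in>{1..Suc k}. G e (bw j (x, e)))" using bz by (simp add: scaleR_add_right)
        finally show ?case .
      qed
      have "interp_field F (\<lambda>e. the_inv_into V (F e)) n x e =
          (1 / e) *\<^sub>R (\<Sum>k=1..n. pcoef n k *\<^sub>R ((F e ^^ k) x - (Fi e ^^ k) x))"
        unfolding interp_field_def Fi_def by simp
      also have "\<dots> = (1 / e) *\<^sub>R (\<Sum>k=1..n. e *\<^sub>R (pcoef n k *\<^sub>R ((\<Sum>j<k. G e (fw j (x, e))) + (\<Sum>j\<in>{1..k}. G e (bw j (x, e))))))"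
      proof (intro arg_cong[where f="\<lambda>t. (1 / e) *\<^sub>R t"] sum.cong refl)
        fix k assume "k \<in> {1..n}"
        then have kn: "k \<le> n" by simp
        have "(F e ^^ k) x - (Fi e ^^ k) x = ((F e ^^ k) x - x) + (x - (Fi e ^^ k) x)" by simp
        also have "\<dots> = e *\<^sub>R ((\<Sum>j<k. G e (fw j (x, e))) + (\<Sum>j\<in>{1..k}. G e (bw j (x, e))))"
          unfolding tf[OF kn] tb[OF kn] by (simp add: scaleR_add_right)
        finally show "pcoef n k *\<^sub>R ((F e ^^ k) x - (Fi e ^^ k) x) =
            e *\<^sub>R (pcoef n k *\<^sub>R ((\<Sum>j<k. G e (fw j (x, e))) + (\<Sum>j\<in>{1..k}. G e (bw j (x, e)))))"
          by simp
      qed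
      also have "\<dots> = (1 / e) *\<^sub>R (e *\<^sub>R (\<Sum>k=1..n. pcoef n k *\<^sub>R ((\<Sum>j<k. G e (fw j (x, e))) + (\<Sum>j\<in>{1..k}. G e (bw j (x, e))))))"
        by (simp only: scaleR_sum_right)
      also have "\<dots> = Y x e" unfolding Y_def using e(1) by simp
      finally show ?thesis by simp
    qed
    show ?thesis
      by (rule exI[of _ Y]) (use sY Y0 Ye in \<open>auto simp: S_def E_def\<close>)
  qed
  show ?thesis
    by (rule exI[of _ r0]) (use r0(1) oW oV D0W WV VD part_inj part_iter part_smooth in blast)
qed


end
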